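(* In the setting of the context, there exists at most one solution $\{x_J,x_q,\theta^*\}$ to the system of equations $$\begin{cases}\displaystyle\int_{\theta^*}^\infty\bigl(1-G(u\mid x_J)\bigr)\,du=\frac{\theta^*\tau}{1-\tau},\\[2mm] \displaystyle(c_r(1-\tau)-1)x_q+(1-\tau)\Bigl(R_e+\int_0^{\theta^*}G(u\mid x_q)\,du\Bigr)=0,\\[2mm] \displaystyle\int_{x_J}^{x_q}J_{\theta^*}(u,0)\,dF(u)+\int_{x_q}^\infty(u-\theta^* )\,dF(u)=\frac{\theta^*\tau}{p_s},\end{cases}$$ where $J_{\theta}(x,0)=(1-\tau)\int_{(\theta,\infty)}(y-\theta)\,G(dy\mid x)-\theta\tau$.
   Context: Parameters: $p_s\in(0,1)$, $\tau\in(0,1)$, $c_r>0$, $R_e>0$. $F$ is the cdf of an exponential random variable $R^{(1)}$ with mean $E[R^{(1)}]>0$ (the first-level rate estimate). For $x\ge0$, $G(\cdot\mid x)$ is the cdf of $|\sqrt{c_rx}+z|^2$, where $z$ is a circularly symmetric complex Gaussian with $E|z|^2=R_e$ (the conditional distribution of the refined second-level rate estimate given first-level estimate $x$). The unknowns are $x_J,x_q\ge0$ and $\theta^*>0$. *)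

theory Defs
  imports "HOL-Probability.Probability"
begin

text \<open>Circularly symmetric complex Gaussian with E|z|^2 = Rv (= R_e): density exp(-|z|^2/Rv)/(pi Rv)
  w.r.t. Lebesgue measure on the complex plane.\<close>
definition cgauss :: "real \<Rightarrow> complex measure" where
  "cgauss Rv = density lborel (\<lambda>z. ennreal (exp (- (cmod z)\<^sup>2 / Rv) / (pi * Rv)))"

definition Gmeas :: "real \<Rightarrow> real \<Rightarrow> real \<Rightarrow> real measure" where
  "Gmeas cr Rv x = distr (cgauss Rv) borel (\<lambda>z. (cmod (complex_of_real (sqrt (cr * x)) + z))\<^sup>2)"

definition Gcdf :: "real \<Rightarrow> real \<Rightarrow> real \<Rightarrow> real \<Rightarrow> real" where
  "Gcdf cr Rv u x = measure (Gmeas cr Rv x) {..u}"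

definition Jfun :: "real \<Rightarrow> real \<Rightarrow> real \<Rightarrow> real \<Rightarrow> real \<Rightarrow> real" where
  "Jfun cr Rv tau theta x =
     (1 - tau) * (\<integral>y\<in>{theta<..}. (y - theta) \<partial>(Gmeas cr Rv x)) - theta * tau"

definition Fdens :: "real \<Rightarrow> real \<Rightarrow> real" where
  "Fdens m u = exponential_density (1 / m) u"

definition is_solution ::
  "real \<Rightarrow> real \<Rightarrow> real \<Rightarrow> real \<Rightarrow> real \<Rightarrow> real \<Rightarrow> real \<Rightarrow> real \<Rightarrow> bool" where
  "is_solution ps tau cr Rv m xJ xq theta \<longleftrightarrow>
     xJ \<ge> 0 \<and> xq \<ge> 0 \<and> theta > 0 \<and>
     (LINT u:{theta..}|lborel. 1 - Gcdf cr Rv u xJ) = theta * tau / (1 - tau) \<and>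
     (cr * (1 - tau) - 1) * xq + (1 - tau) * (Rv + (LINT u:{0..theta}|lborel. Gcdf cr Rv u xq)) = 0 \<and>
     (LBINT u = ereal xJ..ereal xq. Jfun cr Rv tau theta u * Fdens m u)
       + (LINT u:{xq..}|lborel. (u - theta) * Fdens m u) = theta * tau / ps"

end

theory Submission
  imports Defs
begin


lemma lborel_complex_eq:
  "(lborel :: complex measure) = distr (lborel \<Otimes>\<^sub>M lborel) borel (\<lambda>(s,t). Complex s t)"
proof (rule lborel_eqI)
  fix l u :: complex
  assume le: "\<And>b. b \<in> Basis \<Longrightarrow> l \<bullet> b \<le> u \<bullet> b"
  have le1: "Re l \<le> Re u" and le2: "Im l \<le> Im u"
    using le[of 1] le[of \<i>] by (auto simp: inner_complex_def)
  have pre: "(\<lambda>(s,t). Complex s t) -` box l u \<inter> space (lborel \<Otimes>\<^sub>M lborel)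
     = {Re l<..<Re u} \<times> {Im l<..<Im u}"
    by (auto simp: box_def Basis_complex_def inner_complex_def space_pair_measure)
  have m: "(\<lambda>(s,t). Complex s t) \<in> (lborel \<Otimes>\<^sub>M lborel) \<rightarrow>\<^sub>M (borel :: complex measure)"
    by (simp add: Complex_eq[abs_def] case_prod_beta')
  show "emeasure (distr (lborel \<Otimes>\<^sub>M lborel) borel (\<lambda>(s,t). Complex s t)) (box l u) = (\<Prod>b\<in>Basis. (u - l) \<bullet> b)"
    using le1 le2
    by (simp add: emeasure_distr[OF m] pre lborel.emeasure_pair_measure_Times Basis_complex_def inner_complex_def ennreal_mult)
qed simp




definition phi :: "real \<Rightarrow> real \<Rightarrow> real" where
  "phi Rv s = normal_density 0 (sqrt (Rv/2)) s"

lemma phi_nonneg[simp]: "0 \<le> phi Rv s" by (simp add: phi_def)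
lemma phi_meas[measurable]: "phi Rv \<in> borel_measurable borel"
  unfolding phi_def[abs_def] by simp

lemma dens_eq:
  assumes "0 < Rv"
  shows "exp (- ((cmod (Complex s t))\<^sup>2 / Rv)) / (pi * Rv) = phi Rv s * phi Rv t"
proof -
  have "(cmod (Complex s t))\<^sup>2 = s^2 + t^2" by (simp add: cmod_def)
  moreover have "sqrt (2 * pi * (sqrt (Rv/2))\<^sup>2) = sqrt (pi * Rv)" using assms by simp
  moreover have "sqrt (pi*Rv) * sqrt (pi*Rv) = pi * Rv" using assms by simp
  ultimately show ?thesis using assms
    by (simp add: phi_def normal_density_def exp_add[symmetric] field_simps power2_eq_square real_sqrt_mult)
qed

lemma nn_integral_cgauss:
  assumes "0 < Rv" and [measurable]: "g \<in> borel_measurable borel"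
  shows "(\<integral>\<^sup>+z. g z \<partial>cgauss Rv) =
     (\<integral>\<^sup>+s. \<integral>\<^sup>+t. ennreal (phi Rv s * phi Rv t) * g (Complex s t) \<partial>lborel \<partial>lborel)"
proof -
  have m: "(\<lambda>(s,t). Complex s t) \<in> (lborel \<Otimes>\<^sub>M lborel) \<rightarrow>\<^sub>M (borel :: complex measure)"
    by (simp add: Complex_eq[abs_def] case_prod_beta')
  have "(\<integral>\<^sup>+z. g z \<partial>cgauss Rv) = (\<integral>\<^sup>+z. ennreal (exp (- (cmod z)\<^sup>2 / Rv) / (pi * Rv)) * g z \<partial>lborel)"
    unfolding cgauss_def by (subst nn_integral_density) auto
  also have "\<dots> = (\<integral>\<^sup>+p. ennreal (exp (- (cmod ((\<lambda>(s,t). Complex s t) p))\<^sup>2 / Rv) / (pi * Rv)) * g ((\<lambda>(s,t). Complex s t) p) \<partial>(lborel \<Otimes>\<^sub>M lborel))"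
    by (subst lborel_complex_eq, subst nn_integral_distr[OF m]) auto
  also have "\<dots> = (\<integral>\<^sup>+p. ennreal (phi Rv (fst p) * phi Rv (snd p)) * g (Complex (fst p) (snd p)) \<partial>(lborel \<Otimes>\<^sub>M lborel))"
    using dens_eq[OF assms(1)] by (intro nn_integral_cong) (auto split: prod.splits)
  also have "\<dots> = (\<integral>\<^sup>+s. \<integral>\<^sup>+t. ennreal (phi Rv s * phi Rv t) * g (Complex s t) \<partial>lborel \<partial>lborel)"
  proof (subst lborel.nn_integral_fst[symmetric])
    show "(\<lambda>p. ennreal (phi Rv (fst p) * phi Rv (snd p)) * g (Complex (fst p) (snd p))) \<in> borel_measurable (lborel \<Otimes>\<^sub>M lborel)"
      using m by (simp add: case_prod_beta')
  qed simp
  finally show ?thesis .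
qed

lemma nn_phi: "0 < Rv \<Longrightarrow> (\<integral>\<^sup>+s. ennreal (phi Rv s) \<partial>lborel) = 1"
  unfolding phi_def
  by (subst nn_integral_eq_integral) (auto simp: integrable_normal_density)

lemma prob_space_cgauss: "0 < Rv \<Longrightarrow> prob_space (cgauss Rv)"
proof
  assume R: "0 < Rv"
  have "emeasure (cgauss Rv) (space (cgauss Rv)) = (\<integral>\<^sup>+z. 1 \<partial>cgauss Rv)"
    by simp
  also have "\<dots> = (\<integral>\<^sup>+s. \<integral>\<^sup>+t. ennreal (phi Rv s) * ennreal (phi Rv t) \<partial>lborel \<partial>lborel)"
    by (subst nn_integral_cgauss[OF R]) (auto simp: ennreal_mult)
  also have "\<dots> = (\<integral>\<^sup>+s. ennreal (phi Rv s) * (\<integral>\<^sup>+t. ennreal (phi Rv t) \<partial>lborel) \<partial>lborel)"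
    by (simp add: nn_integral_cmult)
  also have "\<dots> = 1" using nn_phi[OF R] by simp
  finally show "emeasure (cgauss Rv) (space (cgauss Rv)) = 1" .
qed




lemma not_AE_interval:
  fixes l r :: real
  assumes "l < r" "\<And>x. l < x \<Longrightarrow> x < r \<Longrightarrow> \<not> P x"
  shows "\<not> (AE x in lborel. P x)"
proof
  assume "AE x in lborel. P x"
  then have "AE x in lborel. x \<notin> {l<..<r}" by (rule AE_mp) (use assms(2) in auto)
  then have "emeasure lborel {l<..<r} = 0"
    by (subst (asm) AE_iff_measurable[of "{l<..<r}"]) auto
  with assms(1) show False by simp
qed

lemma phi_alt:
  assumes R: "0 < Rv" shows "phi Rv x = exp (- (x\<^sup>2 / Rv)) / sqrt (pi * Rv)"
proof -
  have s: "(sqrt (Rv/2))\<^sup>2 = Rv/2" using R by simp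
  show ?thesis using R by (simp add: phi_def normal_density_def s)
qed

lemma phi_pos: "0 < Rv \<Longrightarrow> 0 < phi Rv x"
  by (simp add: phi_alt)

lemma phi_le_iff:
  assumes R: "0 < Rv" shows "phi Rv x \<le> phi Rv y \<longleftrightarrow> y\<^sup>2 \<le> x\<^sup>2"
proof -
  have "\<not> pi * Rv < 0" using R pi_gt_zero by (simp add: not_less)
  then show ?thesis using R by (simp add: phi_alt divide_le_cancel)
qed

lemma phi_less_iff:
  assumes R: "0 < Rv" shows "phi Rv x < phi Rv y \<longleftrightarrow> y\<^sup>2 < x\<^sup>2"
proof -
  have "\<not> pi * Rv < 0" using R pi_gt_zero by (simp add: not_less)
  then show ?thesis using R by (simp add: phi_alt divide_less_cancel)
qed

lemma phi_shift:
  assumes R: "0 < Rv" and w: "0 \<le> w" and y: "y \<le> w"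
  shows "phi Rv (y - 2*w) \<le> phi Rv y"
proof -
  have "y\<^sup>2 \<le> (y - 2*w)\<^sup>2"
  proof -
    have "(y - 2*w)\<^sup>2 - y\<^sup>2 = 4*w*(w-y)" by (simp add: power2_eq_square algebra_simps)
    also have "\<dots> \<ge> 0" using w y by simp
    finally show ?thesis by simp
  qed
  then show ?thesis using phi_le_iff[OF R] by simp
qed

lemma phi_shift_strict:
  assumes R: "0 < Rv" and w: "0 < w" and y: "y < w"
  shows "phi Rv (y - 2*w) < phi Rv y"
proof -
  have "y\<^sup>2 < (y - 2*w)\<^sup>2"
  proof -
    have "(y - 2*w)\<^sup>2 - y\<^sup>2 = 4*w*(w-y)" by (simp add: power2_eq_square algebra_simps)
    also have "\<dots> > 0" using w y by simp
    finally show ?thesis by simp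
  qed
  then show ?thesis using phi_less_iff[OF R] by simp
qed

definition PM :: "real \<Rightarrow> real measure" where
  "PM Rv = density lborel (\<lambda>s. ennreal (phi Rv s))"

lemma prob_space_PM: "0 < Rv \<Longrightarrow> prob_space (PM Rv)"
  unfolding PM_def phi_def by (rule prob_space_normal_density) simp

lemma sets_PM[simp, measurable_cong]: "sets (PM Rv) = sets borel"
  by (simp add: PM_def)

lemma emeasure_PM: "S \<in> sets borel \<Longrightarrow> emeasure (PM Rv) S = (\<integral>\<^sup>+x. ennreal (phi Rv x) * indicator S x \<partial>lborel)"
  unfolding PM_def by (subst emeasure_density) auto

lemma interval_mono:
  assumes R: "0 < Rv" and w: "0 \<le> w" and c: "c2 \<le> c1" "c1 \<le> 0"
  shows "measure (PM Rv) {c2-w..c2+w} \<le> measure (PM Rv) {c1-w..c1+w}"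
    and "c2 < c1 \<Longrightarrow> 0 < w \<Longrightarrow> measure (PM Rv) {c2-w..c2+w} < measure (PM Rv) {c1-w..c1+w}"
proof -
  interpret P: prob_space "PM Rv" by (rule prob_space_PM[OF R])
  have "measure (PM Rv) {c2-w..c1+w} = measure (PM Rv) ({c2-w..c2+w} \<union> {c2+w<..c1+w})"
    using c w by (intro arg_cong[where f="measure _"]) auto
  also have "\<dots> = measure (PM Rv) {c2-w..c2+w} + measure (PM Rv) {c2+w<..c1+w}"
    by (rule P.finite_measure_Union) auto
  finally have e1: "measure (PM Rv) {c2-w..c1+w} = measure (PM Rv) {c2-w..c2+w} + measure (PM Rv) {c2+w<..c1+w}" .
  have "measure (PM Rv) {c2-w..c1+w} = measure (PM Rv) ({c2-w..<c1-w} \<union> {c1-w..c1+w})"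
    using c w by (intro arg_cong[where f="measure _"]) auto
  also have "\<dots> = measure (PM Rv) {c2-w..<c1-w} + measure (PM Rv) {c1-w..c1+w}"
    by (rule P.finite_measure_Union) auto
  finally have e2: "measure (PM Rv) {c2-w..c1+w} = measure (PM Rv) {c2-w..<c1-w} + measure (PM Rv) {c1-w..c1+w}" .
  define f where "f x = ennreal (phi Rv (x - 2*w)) * indicator {c2+w..<c1+w} x" for x
  define g where "g x = ennreal (phi Rv x) * indicator {c2+w<..c1+w} x" for x
  have [measurable]: "f \<in> borel_measurable borel" "g \<in> borel_measurable borel"
    unfolding f_def[abs_def] g_def[abs_def] by auto
  have Mm: "emeasure (PM Rv) {c2-w..<c1-w} = (\<integral>\<^sup>+x. f x \<partial>lborel)"
  proof -
    have "emeasure (PM Rv) {c2-w..<c1-w} = (\<integral>\<^sup>+x. ennreal (phi Rv x) * indicator {c2-w..<c1-w} x \<partial>lborel)"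
      by (rule emeasure_PM) auto
    also have "\<dots> = (\<integral>\<^sup>+x. ennreal (phi Rv (-2*w + 1*x)) * indicator {c2-w..<c1-w} (-2*w + 1*x) \<partial>lborel)"
      using nn_integral_real_affine[of "\<lambda>x. ennreal (phi Rv x) * indicator {c2-w..<c1-w} x" 1 "-2*w"] by simp
    also have "\<dots> = (\<integral>\<^sup>+x. f x \<partial>lborel)"
      by (auto simp: f_def indicator_def intro!: nn_integral_cong)
    finally show ?thesis .
  qed
  have Mp: "emeasure (PM Rv) {c2+w<..c1+w} = (\<integral>\<^sup>+x. g x \<partial>lborel)"
    unfolding g_def by (rule emeasure_PM) auto
  have AEle: "AE x in lborel. f x \<le> g x"
    using AE_lborel_singleton[of "c2+w"]
  proof eventually_elim
    case (elim x)
    show ?case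
    proof (cases "c2+w < x \<and> x < c1 + w")
      case True
      then have "phi Rv (x - 2*w) \<le> phi Rv x" using c by (intro phi_shift[OF R w]) auto
      then show ?thesis using True by (auto simp: f_def g_def)
    next
      case False then show ?thesis using elim by (auto simp: f_def g_def)
    qed
  qed
  have fin: "(\<integral>\<^sup>+x. f x \<partial>lborel) \<noteq> \<infinity>"
    using P.emeasure_finite[of "{c2-w..<c1-w}"] Mm by (simp add: infinity_ennreal_def)
  have le: "measure (PM Rv) {c2-w..<c1-w} \<le> measure (PM Rv) {c2+w<..c1+w}"
    unfolding measure_def Mm Mp
    using P.emeasure_finite[of "{c2+w<..c1+w}"] Mp
    by (intro enn2real_mono nn_integral_mono_AE AEle) (auto simp: top.not_eq_extremum)
  show "measure (PM Rv) {c2-w..c2+w} \<le> measure (PM Rv) {c1-w..c1+w}"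
    using e1 e2 le by linarith
  assume lt: "c2 < c1" "0 < w"
  have "(\<integral>\<^sup>+x. f x \<partial>lborel) < (\<integral>\<^sup>+x. g x \<partial>lborel)"
  proof (rule nn_integral_less[OF _ _ fin AEle])
    show "\<not> (AE x in lborel. g x \<le> f x)"
    proof (rule not_AE_interval[of "c2+w" "c1+w"])
      fix x assume x: "c2 + w < x" "x < c1 + w"
      then have "phi Rv (x - 2*w) < phi Rv x" using c lt by (intro phi_shift_strict[OF R]) auto
      then show "\<not> g x \<le> f x" using x by (auto simp: f_def g_def)
    qed (use lt in auto)
  qed auto
  then have "measure (PM Rv) {c2-w..<c1-w} < measure (PM Rv) {c2+w<..c1+w}"
    unfolding measure_def Mm Mp
    using P.emeasure_finite[of "{c2+w<..c1+w}"] Mp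
    by (subst enn2real_less_iff) (auto simp: top.not_eq_extremum)
  then show "measure (PM Rv) {c2-w..c2+w} < measure (PM Rv) {c1-w..c1+w}"
    using e1 e2 by linarith
qed




lemma cmod_shift_sq: "(cmod (complex_of_real a + Complex s t))\<^sup>2 = (a+s)\<^sup>2 + t\<^sup>2"
  by (simp add: cmod_def)

lemma nn_integral_Gmeas:
  assumes R: "0 < Rv" and [measurable]: "g \<in> borel_measurable borel"
  shows "(\<integral>\<^sup>+y. g y \<partial>Gmeas cr Rv x) =
     (\<integral>\<^sup>+t. \<integral>\<^sup>+s. ennreal (phi Rv s * phi Rv t) * g ((sqrt (cr*x) + s)\<^sup>2 + t\<^sup>2) \<partial>lborel \<partial>lborel)"
proof -
  have "(\<integral>\<^sup>+y. g y \<partial>Gmeas cr Rv x) = (\<integral>\<^sup>+z. g ((cmod (complex_of_real (sqrt (cr * x)) + z))\<^sup>2) \<partial>cgauss Rv)"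
    unfolding Gmeas_def by (subst nn_integral_distr) (auto simp: cgauss_def)
  also have "\<dots> = (\<integral>\<^sup>+s. \<integral>\<^sup>+t. ennreal (phi Rv s * phi Rv t) * g ((sqrt (cr*x) + s)\<^sup>2 + t\<^sup>2) \<partial>lborel \<partial>lborel)"
    by (subst nn_integral_cgauss[OF R]) (auto simp: cmod_shift_sq)
  also have "\<dots> = (\<integral>\<^sup>+t. \<integral>\<^sup>+s. ennreal (phi Rv s * phi Rv t) * g ((sqrt (cr*x) + s)\<^sup>2 + t\<^sup>2) \<partial>lborel \<partial>lborel)"
    by (rule lborel_pair.Fubini[symmetric, where f="\<lambda>(s,t). ennreal (phi Rv s * phi Rv t) * g ((sqrt (cr*x) + s)\<^sup>2 + t\<^sup>2)", simplified])
  finally show ?thesis .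
qed

lemma sets_Gmeas[simp, measurable_cong]: "sets (Gmeas cr Rv x) = sets borel"
  by (simp add: Gmeas_def)

lemma space_Gmeas[simp]: "space (Gmeas cr Rv x) = UNIV"
  by (simp add: Gmeas_def)

lemma prob_space_Gmeas: "0 < Rv \<Longrightarrow> prob_space (Gmeas cr Rv x)"
  unfolding Gmeas_def
  by (rule prob_space.prob_space_distr[OF prob_space_cgauss]) (auto simp: cgauss_def)




definition K :: "real \<Rightarrow> real \<Rightarrow> real \<Rightarrow> real \<Rightarrow> ennreal" where
  "K Rv u a t = (\<integral>\<^sup>+s. ennreal (phi Rv s) * indicator {..u} ((a+s)\<^sup>2 + t\<^sup>2) \<partial>lborel)"

lemma K_eq:
  assumes R: "0 < Rv"
  shows "K Rv u a t = emeasure (PM Rv) (if u - t\<^sup>2 < 0 then {} else {-a - sqrt (u-t\<^sup>2) .. -a + sqrt (u-t\<^sup>2)})"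
proof -
  have "indicator {..u} ((a+s)\<^sup>2 + t\<^sup>2) = (indicator (if u - t\<^sup>2 < 0 then {} else {-a - sqrt (u-t\<^sup>2) .. -a + sqrt (u-t\<^sup>2)}) s :: ennreal)" for s
  proof (cases "u - t\<^sup>2 < 0")
    case True
    have "\<not> (a+s)\<^sup>2 + t\<^sup>2 \<le> u" using True by (smt (verit) zero_le_power2)
    then show ?thesis using True by (simp add: indicator_def)
  next
    case False
    have "(a+s)\<^sup>2 + t\<^sup>2 \<le> u \<longleftrightarrow> (a+s)\<^sup>2 \<le> u - t\<^sup>2" by auto
    also have "\<dots> \<longleftrightarrow> sqrt ((a+s)\<^sup>2) \<le> sqrt (u - t\<^sup>2)" by (rule real_sqrt_le_iff[symmetric])
    also have "\<dots> \<longleftrightarrow> \<bar>a+s\<bar> \<le> sqrt (u - t\<^sup>2)" by simp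
    also have "\<dots> \<longleftrightarrow> s \<in> {-a - sqrt (u-t\<^sup>2) .. -a + sqrt (u-t\<^sup>2)}" by auto
    finally show ?thesis using False by (simp add: indicator_def)
  qed
  then show ?thesis unfolding K_def
    by (subst emeasure_PM) (auto intro!: nn_integral_cong)
qed

lemma K_mono:
  assumes R: "0 < Rv" and a: "0 \<le> a1" "a1 \<le> a2"
  shows "K Rv u a2 t \<le> K Rv u a1 t"
    and "a1 < a2 \<Longrightarrow> t\<^sup>2 < u \<Longrightarrow> K Rv u a2 t < K Rv u a1 t"
proof -
  interpret P: prob_space "PM Rv" by (rule prob_space_PM[OF R])
  show "K Rv u a2 t \<le> K Rv u a1 t"
  proof (cases "u - t\<^sup>2 < 0")
    case True then show ?thesis by (simp add: K_eq[OF R])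
  next
    case False
    have "measure (PM Rv) {-a2 - sqrt (u-t\<^sup>2) .. -a2 + sqrt (u-t\<^sup>2)} \<le> measure (PM Rv) {-a1 - sqrt (u-t\<^sup>2) .. -a1 + sqrt (u-t\<^sup>2)}"
      using interval_mono(1)[OF R, of "sqrt (u-t\<^sup>2)" "-a2" "-a1"] False a by simp
    then show ?thesis using False by (simp add: K_eq[OF R] P.emeasure_eq_measure)
  qed
  assume lt: "a1 < a2" "t\<^sup>2 < u"
  have "measure (PM Rv) {-a2 - sqrt (u-t\<^sup>2) .. -a2 + sqrt (u-t\<^sup>2)} < measure (PM Rv) {-a1 - sqrt (u-t\<^sup>2) .. -a1 + sqrt (u-t\<^sup>2)}"
    using interval_mono(2)[OF R, of "sqrt (u-t\<^sup>2)" "-a2" "-a1"] lt a by simp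
  then show "K Rv u a2 t < K Rv u a1 t" using lt by (simp add: K_eq[OF R] P.emeasure_eq_measure ennreal_less_iff)
qed

lemma K_meas[measurable]: "(\<lambda>t. K Rv u a t) \<in> borel_measurable borel"
  unfolding K_def by measurable

lemma emeasure_Gmeas_atMost:
  assumes R: "0 < Rv"
  shows "emeasure (Gmeas cr Rv x) {..u} = (\<integral>\<^sup>+t. ennreal (phi Rv t) * K Rv u (sqrt (cr*x)) t \<partial>lborel)"
proof -
  have "emeasure (Gmeas cr Rv x) {..u} = (\<integral>\<^sup>+y. indicator {..u} y \<partial>Gmeas cr Rv x)"
    by simp
  also have "\<dots> = (\<integral>\<^sup>+t. \<integral>\<^sup>+s. ennreal (phi Rv t) * (ennreal (phi Rv s) * indicator {..u} ((sqrt (cr*x) + s)\<^sup>2 + t\<^sup>2)) \<partial>lborel \<partial>lborel)"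
    by (subst nn_integral_Gmeas[OF R]) (auto simp: ennreal_mult mult_ac intro!: nn_integral_cong)
  also have "\<dots> = (\<integral>\<^sup>+t. ennreal (phi Rv t) * K Rv u (sqrt (cr*x)) t \<partial>lborel)"
    unfolding K_def by (subst nn_integral_cmult) auto
  finally show ?thesis .
qed

lemma Gcdf_mono_x:
  assumes R: "0 < Rv" and c: "0 < cr" and x: "0 \<le> x1" "x1 \<le> x2"
  shows "Gcdf cr Rv u x2 \<le> Gcdf cr Rv u x1"
    and "x1 < x2 \<Longrightarrow> 0 < u \<Longrightarrow> Gcdf cr Rv u x2 < Gcdf cr Rv u x1"
proof -
  interpret G1: prob_space "Gmeas cr Rv x1" by (rule prob_space_Gmeas[OF R])
  interpret G2: prob_space "Gmeas cr Rv x2" by (rule prob_space_Gmeas[OF R])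
  have a: "0 \<le> sqrt (cr*x1)" "sqrt (cr*x1) \<le> sqrt (cr*x2)" using c x by (auto intro!: mult_left_mono)
  have le: "emeasure (Gmeas cr Rv x2) {..u} \<le> emeasure (Gmeas cr Rv x1) {..u}"
    unfolding emeasure_Gmeas_atMost[OF R]
    by (intro nn_integral_mono mult_left_mono K_mono(1)[OF R a]) auto
  then show "Gcdf cr Rv u x2 \<le> Gcdf cr Rv u x1"
    unfolding Gcdf_def by (simp add: G1.emeasure_eq_measure G2.emeasure_eq_measure)
  assume lt: "x1 < x2" "0 < u"
  have a2: "sqrt (cr*x1) < sqrt (cr*x2)" using c lt by simp
  have "emeasure (Gmeas cr Rv x2) {..u} < emeasure (Gmeas cr Rv x1) {..u}"
    unfolding emeasure_Gmeas_atMost[OF R]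
  proof (rule nn_integral_less)
    show "(\<integral>\<^sup>+t. ennreal (phi Rv t) * K Rv u (sqrt (cr*x2)) t \<partial>lborel) \<noteq> \<infinity>"
      using G2.emeasure_finite[of "{..u}"] by (simp add: emeasure_Gmeas_atMost[OF R] infinity_ennreal_def)
    show "AE t in lborel. ennreal (phi Rv t) * K Rv u (sqrt (cr*x2)) t \<le> ennreal (phi Rv t) * K Rv u (sqrt (cr*x1)) t"
      by (intro AE_I2 mult_left_mono K_mono(1)[OF R a]) auto
    show "\<not> (AE t in lborel. ennreal (phi Rv t) * K Rv u (sqrt (cr*x1)) t \<le> ennreal (phi Rv t) * K Rv u (sqrt (cr*x2)) t)"
    proof (rule not_AE_interval[of "- sqrt u" "sqrt u"])
      fix t assume t: "- sqrt u < t" "t < sqrt u"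
      have "\<bar>t\<bar> < sqrt u" using t by auto
      then have "t\<^sup>2 < u" using lt(2) by (metis abs_ge_zero real_sqrt_abs real_sqrt_less_iff)
      then have "K Rv u (sqrt (cr*x2)) t < K Rv u (sqrt (cr*x1)) t"
        by (rule K_mono(2)[OF R a a2])
      moreover have "0 < phi Rv t" by (rule phi_pos[OF R])
      ultimately show "\<not> ennreal (phi Rv t) * K Rv u (sqrt (cr*x1)) t \<le> ennreal (phi Rv t) * K Rv u (sqrt (cr*x2)) t"
        using ennreal_mult_strict_left_mono[of "K Rv u (sqrt (cr*x2)) t" "K Rv u (sqrt (cr*x1)) t" "ennreal (phi Rv t)"]
        by (simp add: not_le)
    qed (use lt in simp)
  qed auto
  then show "Gcdf cr Rv u x2 < Gcdf cr Rv u x1"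
    unfolding Gcdf_def by (simp add: G1.emeasure_eq_measure G2.emeasure_eq_measure ennreal_less_iff)
qed




lemma phi_moment2:
  assumes R: "0 < Rv"
  shows "has_bochner_integral lborel (\<lambda>s. phi Rv s * (a+s)\<^sup>2) (a\<^sup>2 + Rv/2)"
proof -
  have sp: "0 < sqrt (Rv/2)" using R by simp
  have s2: "(sqrt (Rv/2))\<^sup>2 = Rv/2" using R by simp
  have h0: "has_bochner_integral lborel (\<lambda>s. phi Rv s) 1"
    unfolding phi_def using integral_normal_density[OF sp] integrable_normal_density[OF sp]
    by (simp add: has_bochner_integral_iff)
  have h1: "has_bochner_integral lborel (\<lambda>s. phi Rv s * s) 0"
    unfolding phi_def using normal_moment_nz_1[OF sp, of 0] by simp
  have h2: "has_bochner_integral lborel (\<lambda>s. phi Rv s * s^2) (Rv/2)"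
    unfolding phi_def using normal_moment_even[OF sp, of 0 1] s2 by simp
  have "has_bochner_integral lborel (\<lambda>s. a\<^sup>2 * phi Rv s + (2*a) * (phi Rv s * s) + phi Rv s * s^2) (a\<^sup>2 * 1 + (2*a) * 0 + Rv/2)"
    by (intro has_bochner_integral_add has_bochner_integral_mult_right h0 h1 h2)
  moreover have "(\<lambda>s. a\<^sup>2 * phi Rv s + (2*a) * (phi Rv s * s) + phi Rv s * s^2) = (\<lambda>s. phi Rv s * (a+s)\<^sup>2)"
    by (rule ext) (simp add: power2_eq_square algebra_simps)
  ultimately show ?thesis by simp
qed

lemma nn_phi_moment2:
  assumes R: "0 < Rv"
  shows "(\<integral>\<^sup>+s. ennreal (phi Rv s * (a+s)\<^sup>2) \<partial>lborel) = ennreal (a\<^sup>2 + Rv/2)"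
  using phi_moment2[OF R, of a]
  by (subst nn_integral_eq_integral) (auto simp: has_bochner_integral_iff)

lemma nn_integral_Gmeas_id:
  assumes R: "0 < Rv" and c: "0 < cr" and x: "0 \<le> x"
  shows "(\<integral>\<^sup>+y. ennreal y \<partial>Gmeas cr Rv x) = ennreal (cr * x + Rv)"
proof -
  define a where "a = sqrt (cr*x)"
  have a2: "a\<^sup>2 = cr * x" using c x by (simp add: a_def)
  have m2: "(\<integral>\<^sup>+s. ennreal (phi Rv s * (a+s)\<^sup>2) \<partial>lborel) = ennreal (a\<^sup>2 + Rv/2)"
    by (rule nn_phi_moment2[OF R])
  have m2': "(\<integral>\<^sup>+s. ennreal (phi Rv s * (0+s)\<^sup>2) \<partial>lborel) = ennreal (0\<^sup>2 + Rv/2)"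
    by (rule nn_phi_moment2[OF R])
  have "(\<integral>\<^sup>+y. ennreal y \<partial>Gmeas cr Rv x) =
     (\<integral>\<^sup>+t. \<integral>\<^sup>+s. ennreal (phi Rv s * phi Rv t) * ennreal ((a + s)\<^sup>2 + t\<^sup>2) \<partial>lborel \<partial>lborel)"
    unfolding a_def by (rule nn_integral_Gmeas[OF R]) simp
  also have "\<dots> = (\<integral>\<^sup>+t. ennreal (phi Rv t) * ((\<integral>\<^sup>+s. ennreal (phi Rv s * (a+s)\<^sup>2) \<partial>lborel) + ennreal (t\<^sup>2) * (\<integral>\<^sup>+s. ennreal (phi Rv s) \<partial>lborel)) \<partial>lborel)"
  proof (intro nn_integral_cong)
    fix t
    have "ennreal (phi Rv s * phi Rv t) * ennreal ((a + s)\<^sup>2 + t\<^sup>2) = ennreal (phi Rv t) * (ennreal (phi Rv s * (a+s)\<^sup>2) + ennreal (t\<^sup>2) * ennreal (phi Rv s))" for s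
    proof -
      have "ennreal (phi Rv s * phi Rv t) * ennreal ((a + s)\<^sup>2 + t\<^sup>2) = ennreal (phi Rv t * (phi Rv s * (a+s)\<^sup>2 + t\<^sup>2 * phi Rv s))"
        by (simp add: ennreal_mult'[symmetric] algebra_simps)
      also have "\<dots> = ennreal (phi Rv t) * (ennreal (phi Rv s * (a+s)\<^sup>2) + ennreal (t\<^sup>2) * ennreal (phi Rv s))"
      proof -
        have e1: "ennreal (phi Rv s * (a+s)\<^sup>2 + t\<^sup>2 * phi Rv s) = ennreal (phi Rv s * (a+s)\<^sup>2) + ennreal (t\<^sup>2 * phi Rv s)"
          by (rule ennreal_plus) auto
        have e2: "ennreal (t\<^sup>2 * phi Rv s) = ennreal (t\<^sup>2) * ennreal (phi Rv s)"
          by (rule ennreal_mult) auto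
        have e3: "ennreal (phi Rv t * (phi Rv s * (a+s)\<^sup>2 + t\<^sup>2 * phi Rv s)) = ennreal (phi Rv t) * ennreal (phi Rv s * (a+s)\<^sup>2 + t\<^sup>2 * phi Rv s)"
          by (rule ennreal_mult) auto
        show ?thesis unfolding e3 e1 e2 ..
      qed
      finally show ?thesis .
    qed
    then have "(\<integral>\<^sup>+s. ennreal (phi Rv s * phi Rv t) * ennreal ((a + s)\<^sup>2 + t\<^sup>2) \<partial>lborel)
       = (\<integral>\<^sup>+s. ennreal (phi Rv t) * (ennreal (phi Rv s * (a+s)\<^sup>2) + ennreal (t\<^sup>2) * ennreal (phi Rv s)) \<partial>lborel)"
      by simp
    also have "\<dots> = ennreal (phi Rv t) * ((\<integral>\<^sup>+s. ennreal (phi Rv s * (a+s)\<^sup>2) \<partial>lborel) + ennreal (t\<^sup>2) * (\<integral>\<^sup>+s. ennreal (phi Rv s) \<partial>lborel))"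
      by (simp add: nn_integral_cmult nn_integral_add)
    finally show "(\<integral>\<^sup>+s. ennreal (phi Rv s * phi Rv t) * ennreal ((a + s)\<^sup>2 + t\<^sup>2) \<partial>lborel) = ennreal (phi Rv t) * ((\<integral>\<^sup>+s. ennreal (phi Rv s * (a+s)\<^sup>2) \<partial>lborel) + ennreal (t\<^sup>2) * (\<integral>\<^sup>+s. ennreal (phi Rv s) \<partial>lborel))" .
  qed
  also have "\<dots> = (\<integral>\<^sup>+t. ennreal (a\<^sup>2 + Rv/2) * ennreal (phi Rv t) + ennreal (phi Rv t * (0 + t)\<^sup>2) \<partial>lborel)"
  proof (intro nn_integral_cong)
    fix t
    show "ennreal (phi Rv t) * ((\<integral>\<^sup>+s. ennreal (phi Rv s * (a+s)\<^sup>2) \<partial>lborel) + ennreal (t\<^sup>2) * (\<integral>\<^sup>+s. ennreal (phi Rv s) \<partial>lborel))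
       = ennreal (a\<^sup>2 + Rv/2) * ennreal (phi Rv t) + ennreal (phi Rv t * (0 + t)\<^sup>2)"
      unfolding m2 nn_phi[OF R] by (simp add: distrib_left ennreal_mult[symmetric] mult_ac)
  qed
  also have "\<dots> = ennreal (a\<^sup>2 + Rv/2) * (\<integral>\<^sup>+t. ennreal (phi Rv t) \<partial>lborel) + ennreal (0\<^sup>2 + Rv/2)"
    using m2' by (subst nn_integral_add) (auto simp: nn_integral_cmult)
  also have "\<dots> = ennreal (cr * x + Rv)"
    using R a2 c x by (simp add: nn_phi ennreal_plus[symmetric] del: ennreal_plus)
  finally show ?thesis .
qed




lemma Gcdf_mono_u: "0 < Rv \<Longrightarrow> mono (\<lambda>u. Gcdf cr Rv u x)"
proof (rule monoI)
  fix u v :: real assume R: "0 < Rv" and "u \<le> v"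
  interpret G: prob_space "Gmeas cr Rv x" by (rule prob_space_Gmeas[OF R])
  show "Gcdf cr Rv u x \<le> Gcdf cr Rv v x"
    unfolding Gcdf_def using \<open>u \<le> v\<close> by (intro G.finite_measure_mono) auto
qed

lemma Gcdf_meas[measurable]: "0 < Rv \<Longrightarrow> (\<lambda>u. Gcdf cr Rv u x) \<in> borel_measurable borel"
  by (rule borel_measurable_mono[OF Gcdf_mono_u])

lemma Gcdf_bounds: "0 < Rv \<Longrightarrow> 0 \<le> Gcdf cr Rv u x \<and> Gcdf cr Rv u x \<le> 1"
proof -
  assume R: "0 < Rv"
  interpret G: prob_space "Gmeas cr Rv x" by (rule prob_space_Gmeas[OF R])
  show ?thesis unfolding Gcdf_def by simp
qed

lemma AE_Gmeas_nonneg: "AE y in Gmeas cr Rv x. 0 \<le> y"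
  unfolding Gmeas_def by (subst AE_distr_iff) (auto simp: cgauss_def)

lemma layer_cake_upper:
  assumes R: "0 < Rv"
  shows "(\<integral>\<^sup>+y. ennreal (y - \<theta>) \<partial>Gmeas cr Rv x) =
         (\<integral>\<^sup>+u. indicator {\<theta>..} u * ennreal (1 - Gcdf cr Rv u x) \<partial>lborel)"
proof -
  interpret G: prob_space "Gmeas cr Rv x" by (rule prob_space_Gmeas[OF R])
  interpret P: pair_sigma_finite lborel "Gmeas cr Rv x" ..
  have e: "ennreal (1 - Gcdf cr Rv u x) = (\<integral>\<^sup>+y. indicator {u<..} y \<partial>Gmeas cr Rv x)" for u
  proof -
    have "1 - Gcdf cr Rv u x = measure (Gmeas cr Rv x) {u<..}"
      unfolding Gcdf_def using G.prob_compl[of "{..u}"] by (simp add: Compl_eq_Diff_UNIV[symmetric] Compl_atMost)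
    then show ?thesis by (simp add: G.emeasure_eq_measure)
  qed
  have "(\<integral>\<^sup>+u. indicator {\<theta>..} u * ennreal (1 - Gcdf cr Rv u x) \<partial>lborel) =
        (\<integral>\<^sup>+u. \<integral>\<^sup>+y. indicator {\<theta>..} u * indicator {u<..} y \<partial>Gmeas cr Rv x \<partial>lborel)"
    unfolding e by (subst nn_integral_cmult) auto
  also have "\<dots> = (\<integral>\<^sup>+y. \<integral>\<^sup>+u. indicator {\<theta>..} u * indicator {u<..} y \<partial>lborel \<partial>Gmeas cr Rv x)"
  proof -
    have m: "(\<lambda>(u,y). indicator {\<theta>..} u * indicator {u<..} y :: ennreal) = (\<lambda>(u,y). if \<theta> \<le> u \<and> u < y then 1 else 0)"
      by (auto simp: fun_eq_iff indicator_def)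
    have "(\<lambda>(u,y). indicator {\<theta>..} u * indicator {u<..} y :: ennreal) \<in> borel_measurable (lborel \<Otimes>\<^sub>M Gmeas cr Rv x)"
      unfolding m by measurable
    then show ?thesis by (rule P.Fubini[symmetric, where f="\<lambda>(u,y). indicator {\<theta>..} u * indicator {u<..} y", simplified])
  qed
  also have "\<dots> = (\<integral>\<^sup>+y. ennreal (y - \<theta>) \<partial>Gmeas cr Rv x)"
  proof (intro nn_integral_cong)
    fix y
    have "(\<integral>\<^sup>+u. indicator {\<theta>..} u * indicator {u<..} y \<partial>lborel) = (\<integral>\<^sup>+u. indicator {\<theta>..<y} u \<partial>lborel)"
      by (intro nn_integral_cong) (auto simp: indicator_def)
    also have "\<dots> = ennreal (y - \<theta>)"
      by (cases "\<theta> \<le> y") (auto simp: ennreal_neg)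
    finally show "(\<integral>\<^sup>+u. indicator {\<theta>..} u * indicator {u<..} y \<partial>lborel) = ennreal (y - \<theta>)" .
  qed
  finally show ?thesis ..
qed

lemma layer_cake_lower:
  assumes R: "0 < Rv"
  shows "(\<integral>\<^sup>+y. ennreal (\<theta> - y) \<partial>Gmeas cr Rv x) =
         (\<integral>\<^sup>+u. indicator {0..\<theta>} u * ennreal (Gcdf cr Rv u x) \<partial>lborel)"
proof -
  interpret G: prob_space "Gmeas cr Rv x" by (rule prob_space_Gmeas[OF R])
  interpret P: pair_sigma_finite lborel "Gmeas cr Rv x" ..
  have e: "ennreal (Gcdf cr Rv u x) = (\<integral>\<^sup>+y. indicator {..u} y \<partial>Gmeas cr Rv x)" for u
    unfolding Gcdf_def by (simp add: G.emeasure_eq_measure)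
  have "(\<integral>\<^sup>+u. indicator {0..\<theta>} u * ennreal (Gcdf cr Rv u x) \<partial>lborel) =
        (\<integral>\<^sup>+u. \<integral>\<^sup>+y. indicator {0..\<theta>} u * indicator {..u} y \<partial>Gmeas cr Rv x \<partial>lborel)"
    unfolding e by (subst nn_integral_cmult) auto
  also have "\<dots> = (\<integral>\<^sup>+y. \<integral>\<^sup>+u. indicator {0..\<theta>} u * indicator {..u} y \<partial>lborel \<partial>Gmeas cr Rv x)"
  proof -
    have m: "(\<lambda>(u,y). indicator {0..\<theta>} u * indicator {..u} y :: ennreal) = (\<lambda>(u,y). if 0 \<le> u \<and> u \<le> \<theta> \<and> y \<le> u then 1 else 0)"
      by (auto simp: fun_eq_iff indicator_def)
    have "(\<lambda>(u,y). indicator {0..\<theta>} u * indicator {..u} y :: ennreal) \<in> borel_measurable (lborel \<Otimes>\<^sub>M Gmeas cr Rv x)"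
      unfolding m by measurable
    then show ?thesis by (rule P.Fubini[symmetric, where f="\<lambda>(u,y). indicator {0..\<theta>} u * indicator {..u} y", simplified])
  qed
  also have "\<dots> = (\<integral>\<^sup>+y. ennreal (\<theta> - y) \<partial>Gmeas cr Rv x)"
  proof (intro nn_integral_cong_AE)
    show "AE y in Gmeas cr Rv x. (\<integral>\<^sup>+u. indicator {0..\<theta>} u * indicator {..u} y \<partial>lborel) = ennreal (\<theta> - y)"
      using AE_Gmeas_nonneg
    proof eventually_elim
      case (elim y)
      have "(\<integral>\<^sup>+u. indicator {0..\<theta>} u * indicator {..u} y \<partial>lborel) = (\<integral>\<^sup>+u. indicator {y..\<theta>} u \<partial>lborel)"
        using elim by (intro nn_integral_cong) (auto simp: indicator_def)
      also have "\<dots> = ennreal (\<theta> - y)"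
        by (cases "y \<le> \<theta>") (auto simp: ennreal_neg)
      finally show ?case .
    qed
  qed
  finally show ?thesis ..
qed




definition hp :: "real \<Rightarrow> real \<Rightarrow> real \<Rightarrow> real \<Rightarrow> real" where
  "hp cr Rv x \<theta> = enn2real (\<integral>\<^sup>+y. ennreal (y - \<theta>) \<partial>Gmeas cr Rv x)"
definition hm :: "real \<Rightarrow> real \<Rightarrow> real \<Rightarrow> real \<Rightarrow> real" where
  "hm cr Rv x \<theta> = enn2real (\<integral>\<^sup>+y. ennreal (\<theta> - y) \<partial>Gmeas cr Rv x)"

lemma hp_nonneg: "0 \<le> hp cr Rv x \<theta>" by (simp add: hp_def)
lemma hm_nonneg: "0 \<le> hm cr Rv x \<theta>" by (simp add: hm_def)

lemma hp_fin:
  assumes R: "0 < Rv" and c: "0 < cr" and x: "0 \<le> x" and t: "0 \<le> \<theta>"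
  shows "(\<integral>\<^sup>+y. ennreal (y - \<theta>) \<partial>Gmeas cr Rv x) < top"
proof -
  have "(\<integral>\<^sup>+y. ennreal (y - \<theta>) \<partial>Gmeas cr Rv x) \<le> (\<integral>\<^sup>+y. ennreal y \<partial>Gmeas cr Rv x)"
    using t by (intro nn_integral_mono ennreal_leI) auto
  also have "\<dots> = ennreal (cr*x + Rv)" by (rule nn_integral_Gmeas_id[OF R c x])
  finally show ?thesis using ennreal_less_top order.strict_trans1 by blast
qed

lemma hm_fin:
  assumes R: "0 < Rv" and t: "0 \<le> \<theta>"
  shows "(\<integral>\<^sup>+y. ennreal (\<theta> - y) \<partial>Gmeas cr Rv x) < top"
proof -
  interpret G: prob_space "Gmeas cr Rv x" by (rule prob_space_Gmeas[OF R])
  have "(\<integral>\<^sup>+y. ennreal (\<theta> - y) \<partial>Gmeas cr Rv x) \<le> (\<integral>\<^sup>+y. ennreal \<theta> \<partial>Gmeas cr Rv x)"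
  proof (rule nn_integral_mono_AE)
    show "AE y in Gmeas cr Rv x. ennreal (\<theta> - y) \<le> ennreal \<theta>"
      using AE_Gmeas_nonneg[of cr Rv x] by eventually_elim (auto intro!: ennreal_leI)
  qed
  also have "\<dots> = ennreal \<theta>" using G.emeasure_space_1 by simp
  finally show ?thesis using ennreal_less_top order.strict_trans1 by blast
qed

lemma hp_eq_fin: "(\<integral>\<^sup>+y. ennreal (y - \<theta>) \<partial>Gmeas cr Rv x) < top \<Longrightarrow>
   (\<integral>\<^sup>+y. ennreal (y - \<theta>) \<partial>Gmeas cr Rv x) = ennreal (hp cr Rv x \<theta>)"
  unfolding hp_def by (simp add: ennreal_enn2real_if)

lemma hm_eq_fin: "(\<integral>\<^sup>+y. ennreal (\<theta> - y) \<partial>Gmeas cr Rv x) < top \<Longrightarrow>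
   (\<integral>\<^sup>+y. ennreal (\<theta> - y) \<partial>Gmeas cr Rv x) = ennreal (hm cr Rv x \<theta>)"
  unfolding hm_def by (simp add: ennreal_enn2real_if)

lemma eq1_link:
  assumes R: "0 < Rv"
  shows "(LINT u:{\<theta>..}|lborel. 1 - Gcdf cr Rv u x) = hp cr Rv x \<theta>"
proof -
  have "(LINT u:{\<theta>..}|lborel. 1 - Gcdf cr Rv u x) = (\<integral>u. indicator {\<theta>..} u * (1 - Gcdf cr Rv u x) \<partial>lborel)"
    by (simp add: set_lebesgue_integral_def)
  also have "\<dots> = enn2real (\<integral>\<^sup>+u. ennreal (indicator {\<theta>..} u * (1 - Gcdf cr Rv u x)) \<partial>lborel)"
    using Gcdf_bounds[OF R] Gcdf_meas[OF R] by (intro integral_eq_nn_integral) auto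
  also have "(\<integral>\<^sup>+u. ennreal (indicator {\<theta>..} u * (1 - Gcdf cr Rv u x)) \<partial>lborel) = (\<integral>\<^sup>+u. indicator {\<theta>..} u * ennreal (1 - Gcdf cr Rv u x) \<partial>lborel)"
    by (intro nn_integral_cong) (simp add: indicator_def)
  also have "\<dots> = (\<integral>\<^sup>+y. ennreal (y - \<theta>) \<partial>Gmeas cr Rv x)"
    by (rule layer_cake_upper[OF R, symmetric])
  finally show ?thesis by (simp add: hp_def)
qed

lemma eq2_link:
  assumes R: "0 < Rv"
  shows "(LINT u:{0..\<theta>}|lborel. Gcdf cr Rv u x) = hm cr Rv x \<theta>"
proof -
  have "(LINT u:{0..\<theta>}|lborel. Gcdf cr Rv u x) = (\<integral>u. indicator {0..\<theta>} u * Gcdf cr Rv u x \<partial>lborel)"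
    by (simp add: set_lebesgue_integral_def)
  also have "\<dots> = enn2real (\<integral>\<^sup>+u. ennreal (indicator {0..\<theta>} u * Gcdf cr Rv u x) \<partial>lborel)"
    using Gcdf_bounds[OF R] Gcdf_meas[OF R] by (intro integral_eq_nn_integral) auto
  also have "(\<integral>\<^sup>+u. ennreal (indicator {0..\<theta>} u * Gcdf cr Rv u x) \<partial>lborel) = (\<integral>\<^sup>+u. indicator {0..\<theta>} u * ennreal (Gcdf cr Rv u x) \<partial>lborel)"
    by (intro nn_integral_cong) (simp add: indicator_def)
  also have "\<dots> = (\<integral>\<^sup>+y. ennreal (\<theta> - y) \<partial>Gmeas cr Rv x)"
    by (rule layer_cake_lower[OF R, symmetric])
  finally show ?thesis by (simp add: hm_def)
qed

lemma Jfun_link: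
  "Jfun cr Rv tau \<theta> x = (1 - tau) * hp cr Rv x \<theta> - \<theta> * tau"
proof -
  have "(\<integral>y\<in>{\<theta><..}. (y - \<theta>) \<partial>(Gmeas cr Rv x)) = (\<integral>y. indicator {\<theta><..} y * (y - \<theta>) \<partial>Gmeas cr Rv x)"
    by (simp add: set_lebesgue_integral_def)
  also have "\<dots> = enn2real (\<integral>\<^sup>+y. ennreal (indicator {\<theta><..} y * (y - \<theta>)) \<partial>Gmeas cr Rv x)"
    by (intro integral_eq_nn_integral) (auto simp: indicator_def)
  also have "(\<integral>\<^sup>+y. ennreal (indicator {\<theta><..} y * (y - \<theta>)) \<partial>Gmeas cr Rv x) = (\<integral>\<^sup>+y. ennreal (y - \<theta>) \<partial>Gmeas cr Rv x)"
    by (intro nn_integral_cong) (auto simp: indicator_def ennreal_neg)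
  finally show ?thesis by (simp add: Jfun_def hp_def)
qed

lemma hp_hm:
  assumes R: "0 < Rv" and c: "0 < cr" and x: "0 \<le> x" and t: "0 \<le> \<theta>"
  shows "hp cr Rv x \<theta> + \<theta> = hm cr Rv x \<theta> + cr * x + Rv"
proof -
  interpret G: prob_space "Gmeas cr Rv x" by (rule prob_space_Gmeas[OF R])
  have "(\<integral>\<^sup>+y. ennreal (y - \<theta>) + ennreal \<theta> \<partial>Gmeas cr Rv x) = (\<integral>\<^sup>+y. ennreal (\<theta> - y) + ennreal y \<partial>Gmeas cr Rv x)"
  proof (intro nn_integral_cong_AE)
    show "AE y in Gmeas cr Rv x. ennreal (y - \<theta>) + ennreal \<theta> = ennreal (\<theta> - y) + ennreal y"
      using AE_Gmeas_nonneg
    proof eventually_elim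
      case (elim y)
      show ?case
      proof (cases "\<theta> \<le> y")
        case True
        then show ?thesis using t by (simp add: ennreal_neg ennreal_plus[symmetric] del: ennreal_plus)
      next
        case False
        then show ?thesis using elim by (simp add: ennreal_neg ennreal_plus[symmetric] del: ennreal_plus)
      qed
    qed
  qed
  then have "(\<integral>\<^sup>+y. ennreal (y - \<theta>) \<partial>Gmeas cr Rv x) + ennreal \<theta> = (\<integral>\<^sup>+y. ennreal (\<theta> - y) \<partial>Gmeas cr Rv x) + ennreal (cr*x + Rv)"
    using G.emeasure_space_1 by (simp add: nn_integral_add nn_integral_Gmeas_id[OF R c x])
  then have "ennreal (hp cr Rv x \<theta>) + ennreal \<theta> = ennreal (hm cr Rv x \<theta>) + ennreal (cr*x + Rv)"
    using hp_eq_fin[OF hp_fin[OF R c x t]] hm_eq_fin[OF hm_fin[OF R t]] by simp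
  then have "ennreal (hp cr Rv x \<theta> + \<theta>) = ennreal (hm cr Rv x \<theta> + (cr*x + Rv))"
    using t c x R hp_nonneg hm_nonneg by (simp add: ennreal_plus[symmetric] del: ennreal_plus)
  then have "hp cr Rv x \<theta> + \<theta> = hm cr Rv x \<theta> + (cr*x + Rv)"
    using t c x R hp_nonneg[of cr Rv x \<theta>] hm_nonneg[of cr Rv x \<theta>]
    by (subst (asm) ennreal_inj) auto
  then show ?thesis by simp
qed




lemma hp_upper:
  assumes R: "0 < Rv"
  shows "(\<integral>\<^sup>+u. indicator {\<theta>..} u * ennreal (1 - Gcdf cr Rv u x) \<partial>lborel) = (\<integral>\<^sup>+y. ennreal (y - \<theta>) \<partial>Gmeas cr Rv x)"
  by (rule layer_cake_upper[OF R, symmetric])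

lemma hp_strict_mono_x:
  assumes R: "0 < Rv" and c: "0 < cr" and x: "0 \<le> x1" "x1 < x2" and t: "0 < \<theta>"
  shows "hp cr Rv x1 \<theta> < hp cr Rv x2 \<theta>"
proof -
  have x2: "0 \<le> x2" using x by simp
  define f where "f k u = indicator {\<theta>..} u * ennreal (1 - Gcdf cr Rv u k)" for k u
  have fm[measurable]: "f k \<in> borel_measurable borel" for k
    unfolding f_def[abs_def] using Gcdf_meas[OF R] by measurable
  have e1: "(\<integral>\<^sup>+u. f x1 u \<partial>lborel) = ennreal (hp cr Rv x1 \<theta>)"
    unfolding f_def hp_upper[OF R] using hp_eq_fin[OF hp_fin[OF R c x(1)]] t by simp
  have e2: "(\<integral>\<^sup>+u. f x2 u \<partial>lborel) = ennreal (hp cr Rv x2 \<theta>)"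
    unfolding f_def hp_upper[OF R] using hp_eq_fin[OF hp_fin[OF R c x2]] t by simp
  have "(\<integral>\<^sup>+u. f x1 u \<partial>lborel) < (\<integral>\<^sup>+u. f x2 u \<partial>lborel)"
  proof (rule nn_integral_less)
    show "(\<integral>\<^sup>+u. f x1 u \<partial>lborel) \<noteq> \<infinity>" using e1 by simp
    show "AE u in lborel. f x1 u \<le> f x2 u"
    proof (rule AE_I2)
      fix u
      have "Gcdf cr Rv u x2 \<le> Gcdf cr Rv u x1" using Gcdf_mono_x(1)[OF R c x(1)] x by simp
      then show "f x1 u \<le> f x2 u" unfolding f_def
        using Gcdf_bounds[OF R, of cr u x1] Gcdf_bounds[OF R, of cr u x2]
        by (intro mult_left_mono ennreal_leI) auto
    qed
    show "\<not> (AE u in lborel. f x2 u \<le> f x1 u)"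
    proof (rule not_AE_interval[of \<theta> "\<theta>+1"])
      fix u assume u: "\<theta> < u" "u < \<theta> + 1"
      have "Gcdf cr Rv u x2 < Gcdf cr Rv u x1" using Gcdf_mono_x(2)[OF R c x(1)] x u t by simp
      then show "\<not> f x2 u \<le> f x1 u" unfolding f_def
        using u Gcdf_bounds[OF R, of cr u x1] Gcdf_bounds[OF R, of cr u x2]
        by (simp add: indicator_def ennreal_less_iff not_le)
    qed simp
  qed auto
  then show ?thesis unfolding e1 e2 using hp_nonneg by (simp add: ennreal_less_iff)
qed

lemma hp_mono_x:
  assumes R: "0 < Rv" and c: "0 < cr" and x: "0 \<le> x1" "x1 \<le> x2" and t: "0 < \<theta>"
  shows "hp cr Rv x1 \<theta> \<le> hp cr Rv x2 \<theta>"
  using hp_strict_mono_x[OF R c x(1) _ t, of x2] x by (cases "x1 = x2") auto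

lemma hm_mono_x:
  assumes R: "0 < Rv" and c: "0 < cr" and x: "0 \<le> x1" "x1 \<le> x2" and t: "0 \<le> \<theta>"
  shows "hm cr Rv x2 \<theta> \<le> hm cr Rv x1 \<theta>"
proof -
  have "(\<integral>\<^sup>+u. indicator {0..\<theta>} u * ennreal (Gcdf cr Rv u x2) \<partial>lborel) \<le> (\<integral>\<^sup>+u. indicator {0..\<theta>} u * ennreal (Gcdf cr Rv u x1) \<partial>lborel)"
    using Gcdf_mono_x(1)[OF R c x] Gcdf_bounds[OF R]
    by (intro nn_integral_mono mult_left_mono ennreal_leI) auto
  then have "ennreal (hm cr Rv x2 \<theta>) \<le> ennreal (hm cr Rv x1 \<theta>)"
    unfolding layer_cake_lower[OF R, symmetric] using hm_eq_fin[OF hm_fin[OF R t]] by simp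
  then show ?thesis using hm_nonneg by simp
qed

lemma hp_mono_theta:
  assumes R: "0 < Rv" and c: "0 < cr" and x: "0 \<le> x" and t: "0 \<le> \<theta>1" "\<theta>1 \<le> \<theta>2"
  shows "hp cr Rv x \<theta>2 \<le> hp cr Rv x \<theta>1"
proof -
  have "(\<integral>\<^sup>+y. ennreal (y - \<theta>2) \<partial>Gmeas cr Rv x) \<le> (\<integral>\<^sup>+y. ennreal (y - \<theta>1) \<partial>Gmeas cr Rv x)"
    using t by (intro nn_integral_mono ennreal_leI) auto
  then have "ennreal (hp cr Rv x \<theta>2) \<le> ennreal (hp cr Rv x \<theta>1)"
    using hp_eq_fin[OF hp_fin[OF R c x]] t by simp
  then show ?thesis using hp_nonneg by simp
qed

lemma ennreal_shift_le:
  assumes "(t1::real) \<le> t2" shows "ennreal (y - t1) \<le> ennreal (y - t2) + ennreal (t2 - t1)"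
proof (cases "y \<le> t2")
  case True
  then have "ennreal (y - t1) \<le> ennreal (t2 - t1)" by (intro ennreal_leI) simp
  also have "\<dots> \<le> ennreal (y - t2) + ennreal (t2 - t1)" by simp
  finally show ?thesis .
next
  case False
  then have "ennreal (y - t2) + ennreal (t2 - t1) = ennreal (y - t1)"
    using assms by (subst ennreal_plus[symmetric]) auto
  then show ?thesis by simp
qed

lemma hp_plus_theta_mono:
  assumes R: "0 < Rv" and c: "0 < cr" and x: "0 \<le> x" and t: "0 \<le> \<theta>1" "\<theta>1 \<le> \<theta>2"
  shows "\<theta>1 + hp cr Rv x \<theta>1 \<le> \<theta>2 + hp cr Rv x \<theta>2"
proof -
  interpret G: prob_space "Gmeas cr Rv x" by (rule prob_space_Gmeas[OF R])
  have "(\<integral>\<^sup>+y. ennreal (y - \<theta>1) \<partial>Gmeas cr Rv x) \<le> (\<integral>\<^sup>+y. ennreal (y - \<theta>2) + ennreal (\<theta>2 - \<theta>1) \<partial>Gmeas cr Rv x)"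
    using t by (intro nn_integral_mono ennreal_shift_le) auto
  also have "\<dots> = (\<integral>\<^sup>+y. ennreal (y - \<theta>2) \<partial>Gmeas cr Rv x) + ennreal (\<theta>2 - \<theta>1)"
    using G.emeasure_space_1 by (simp add: nn_integral_add)
  finally have "ennreal (hp cr Rv x \<theta>1) \<le> ennreal (hp cr Rv x \<theta>2) + ennreal (\<theta>2 - \<theta>1)"
    using hp_eq_fin[OF hp_fin[OF R c x]] t by simp
  then have "ennreal (hp cr Rv x \<theta>1) \<le> ennreal (hp cr Rv x \<theta>2 + (\<theta>2 - \<theta>1))"
    using t hp_nonneg[of cr Rv x \<theta>2] by (simp add: ennreal_plus[symmetric] del: ennreal_plus)
  then have "hp cr Rv x \<theta>1 \<le> hp cr Rv x \<theta>2 + (\<theta>2 - \<theta>1)"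
    using t hp_nonneg[of cr Rv x \<theta>2] by (subst (asm) ennreal_le_iff) auto
  then show ?thesis by simp
qed

lemma hp_le_mean:
  assumes R: "0 < Rv" and c: "0 < cr" and x: "0 \<le> x" and t: "0 \<le> \<theta>"
  shows "hp cr Rv x \<theta> \<le> cr * x + Rv"
proof -
  have "(\<integral>\<^sup>+y. ennreal (y - \<theta>) \<partial>Gmeas cr Rv x) \<le> (\<integral>\<^sup>+y. ennreal y \<partial>Gmeas cr Rv x)"
    using t by (intro nn_integral_mono ennreal_leI) auto
  then have "ennreal (hp cr Rv x \<theta>) \<le> ennreal (cr * x + Rv)"
    using hp_eq_fin[OF hp_fin[OF R c x t]] nn_integral_Gmeas_id[OF R c x] by simp
  then show ?thesis using R c x by (subst (asm) ennreal_le_iff) auto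
qed

lemma hp_meas[measurable]:
  assumes R: "0 < Rv"
  shows "(\<lambda>u. hp cr Rv u \<theta>) \<in> borel_measurable borel"
proof -
  have "(\<lambda>u. hp cr Rv u \<theta>) = (\<lambda>u. enn2real (\<integral>\<^sup>+t. \<integral>\<^sup>+s. ennreal (phi Rv s * phi Rv t) * ennreal ((sqrt (cr*u) + s)\<^sup>2 + t\<^sup>2 - \<theta>) \<partial>lborel \<partial>lborel))"
    unfolding hp_def by (subst nn_integral_Gmeas[OF R]) auto
  also have "\<dots> \<in> borel_measurable borel" by measurable
  finally show ?thesis .
qed




lemma Fdens_nonneg: "0 < m \<Longrightarrow> 0 \<le> Fdens m u"
  by (simp add: Fdens_def exponential_density_def)

lemma Fdens_neg: "u < 0 \<Longrightarrow> Fdens m u = 0"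
  by (simp add: Fdens_def exponential_density_def)

lemma Fdens_meas[measurable]: "Fdens m \<in> borel_measurable borel"
  unfolding Fdens_def[abs_def] by simp

lemma Fdens_moment_integrable:
  assumes m: "0 < m"
  shows "integrable lborel (\<lambda>u. Fdens m u * u ^ i)"
proof (rule integrableI_nonneg)
  show "(\<lambda>u. Fdens m u * u ^ i) \<in> borel_measurable lborel" by measurable
  show "AE u in lborel. 0 \<le> Fdens m u * u ^ i"
    by (intro AE_I2) (use m in \<open>auto simp: Fdens_def exponential_density_def intro!: divide_nonneg_pos mult_nonneg_nonneg\<close>)
  have "(\<integral>\<^sup>+u. ennreal (Fdens m u * u ^ i) \<partial>lborel) = fact (0 + i) / (fact 0 * (1/m) ^ i)"
    unfolding Fdens_def by (rule nn_integral_erlang_ith_moment) (use m in simp)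
  then show "(\<integral>\<^sup>+u. ennreal (Fdens m u * u ^ i) \<partial>lborel) < \<infinity>"
    by simp
qed

lemma interval_split:
  fixes g :: "real \<Rightarrow> real"
  assumes g: "integrable lborel g"
  shows "(LBINT u = ereal a..ereal b. g u) = (\<integral>u. indicator {a..} u * g u \<partial>lborel) - (\<integral>u. indicator {b..} u * g u \<partial>lborel)"
proof -
  have ia: "integrable lborel (\<lambda>u. indicator {a..} u * g u)"
    using integrable_real_mult_indicator[OF _ g, of "{a..}"] by (simp add: mult.commute)
  have ib: "integrable lborel (\<lambda>u. indicator {b..} u * g u)"
    using integrable_real_mult_indicator[OF _ g, of "{b..}"] by (simp add: mult.commute)
  have gm[measurable]: "g \<in> borel_measurable borel"
    using borel_measurable_integrable[OF g] by simp
  show ?thesis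
  proof (cases "a \<le> b")
    case True
    have "(LBINT u = ereal a..ereal b. g u) = (\<integral>u. indicator {a<..<b} u * g u \<partial>lborel)"
      using True by (simp add: interval_lebesgue_integral_def set_lebesgue_integral_def)
    also have "\<dots> = (\<integral>u. indicator {a..} u * g u - indicator {b..} u * g u \<partial>lborel)"
    proof (intro integral_cong_AE)
      show "AE u in lborel. indicator {a<..<b} u * g u = indicator {a..} u * g u - indicator {b..} u * g u"
        using AE_lborel_singleton[of a] by eventually_elim (use True in \<open>auto simp: indicator_def\<close>)
    qed measurable
    also have "\<dots> = (\<integral>u. indicator {a..} u * g u \<partial>lborel) - (\<integral>u. indicator {b..} u * g u \<partial>lborel)"
      by (rule Bochner_Integration.integral_diff[OF ia ib])
    finally show ?thesis .
  next
    case False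
    have "(LBINT u = ereal a..ereal b. g u) = - (\<integral>u. indicator {b<..<a} u * g u \<partial>lborel)"
      using False by (simp add: interval_lebesgue_integral_def set_lebesgue_integral_def)
    also have "(\<integral>u. indicator {b<..<a} u * g u \<partial>lborel) = (\<integral>u. indicator {b..} u * g u - indicator {a..} u * g u \<partial>lborel)"
    proof (intro integral_cong_AE)
      show "AE u in lborel. indicator {b<..<a} u * g u = indicator {b..} u * g u - indicator {a..} u * g u"
        using AE_lborel_singleton[of b] by eventually_elim (use False in \<open>auto simp: indicator_def\<close>)
    qed measurable
    also have "\<dots> = (\<integral>u. indicator {b..} u * g u \<partial>lborel) - (\<integral>u. indicator {a..} u * g u \<partial>lborel)"
      by (rule Bochner_Integration.integral_diff[OF ib ia])
    finally show ?thesis by simp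
  qed
qed




definition Jt :: "real \<Rightarrow> real \<Rightarrow> real \<Rightarrow> real \<Rightarrow> real \<Rightarrow> real" where
  "Jt cr Rv tau \<theta> u = (1 - tau) * hp cr Rv u \<theta> - \<theta> * tau"

definition Psi :: "real \<Rightarrow> real \<Rightarrow> real \<Rightarrow> real \<Rightarrow> real \<Rightarrow> real \<Rightarrow> real" where
  "Psi cr Rv tau m \<theta> u = (max (Jt cr Rv tau \<theta> u) 0 + max (u - \<theta> - Jt cr Rv tau \<theta> u) 0) * Fdens m u"

lemma Jfun_Jt: "Jfun cr Rv tau \<theta> u = Jt cr Rv tau \<theta> u"
  by (simp add: Jfun_link Jt_def)

lemma Jt_meas[measurable]: "0 < Rv \<Longrightarrow> (\<lambda>u. Jt cr Rv tau \<theta> u) \<in> borel_measurable borel"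
  unfolding Jt_def by measurable

lemma Fdens_int1: "0 < m \<Longrightarrow> integrable lborel (\<lambda>u. Fdens m u * u)"
  using Fdens_moment_integrable[of m 1] by simp

lemma Fdens_int0: "0 < m \<Longrightarrow> integrable lborel (\<lambda>u. Fdens m u)"
  using Fdens_moment_integrable[of m 0] by simp

lemma j_integrable:
  assumes R: "0 < Rv" and c: "0 < cr" and t: "0 < tau" "tau < 1" and th: "0 < \<theta>" and m: "0 < m"
  shows "integrable lborel (\<lambda>u. Jt cr Rv tau \<theta> u * Fdens m u)"
proof (rule Bochner_Integration.integrable_bound)
  show "integrable lborel (\<lambda>u. cr * (Fdens m u * u) + (Rv + \<theta>) * Fdens m u)"
    using Fdens_int1[OF m] Fdens_int0[OF m] by (intro Bochner_Integration.integrable_add integrable_mult_right)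
  show "(\<lambda>u. Jt cr Rv tau \<theta> u * Fdens m u) \<in> borel_measurable lborel"
    using Jt_meas[OF R] by measurable
  show "AE u in lborel. norm (Jt cr Rv tau \<theta> u * Fdens m u) \<le> norm (cr * (Fdens m u * u) + (Rv + \<theta>) * Fdens m u)"
  proof (rule AE_I2)
    fix u :: real
    show "norm (Jt cr Rv tau \<theta> u * Fdens m u) \<le> norm (cr * (Fdens m u * u) + (Rv + \<theta>) * Fdens m u)"
    proof (cases "u < 0")
      case True then show ?thesis by (simp add: Fdens_neg)
    next
      case False
      have f: "0 \<le> Fdens m u" by (rule Fdens_nonneg[OF m])
      have h0: "0 \<le> hp cr Rv u \<theta>" by (rule hp_nonneg)
      have h1: "hp cr Rv u \<theta> \<le> cr * u + Rv" using hp_le_mean[OF R c _ ] False th by simp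
      have "\<bar>Jt cr Rv tau \<theta> u\<bar> \<le> cr * u + Rv + \<theta>"
      proof -
        have "(1 - tau) * hp cr Rv u \<theta> \<le> cr * u + Rv" using h1 h0 t
          by (smt (verit) mult_left_le_one_le)
        moreover have "0 \<le> (1 - tau) * hp cr Rv u \<theta>" using h0 t by simp
        moreover have "\<theta> * tau \<le> \<theta>" using th t by simp
        moreover have "0 \<le> \<theta> * tau" using th t by simp
        ultimately show ?thesis unfolding Jt_def by linarith
      qed
      then have "\<bar>Jt cr Rv tau \<theta> u\<bar> * Fdens m u \<le> (cr * u + Rv + \<theta>) * Fdens m u"
        using f by (rule mult_right_mono)
      moreover have "0 \<le> (cr * u + Rv + \<theta>) * Fdens m u" using f False c R th by simp
      ultimately show ?thesis using f by (simp add: abs_mult algebra_simps)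
    qed
  qed
qed

lemma d_integrable:
  assumes m: "0 < m"
  shows "integrable lborel (\<lambda>u. (u - \<theta>) * Fdens m u)"
proof -
  have "integrable lborel (\<lambda>u. Fdens m u * u - \<theta> * Fdens m u)"
    using Fdens_int1[OF m] Fdens_int0[OF m] by (intro Bochner_Integration.integrable_diff integrable_mult_right)
  then show ?thesis by (simp add: algebra_simps)
qed




lemma sol_E1:
  assumes R: "0 < Rv" and t: "tau < 1" and S: "is_solution ps tau cr Rv m xJ xq \<theta>"
  shows "(1 - tau) * hp cr Rv xJ \<theta> = \<theta> * tau"
proof -
  have "hp cr Rv xJ \<theta> = \<theta> * tau / (1 - tau)"
    using S eq1_link[OF R] by (simp add: is_solution_def)
  then show ?thesis using t by (simp add: field_simps)
qed

lemma sol_E2: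
  assumes R: "0 < Rv" and S: "is_solution ps tau cr Rv m xJ xq \<theta>"
  shows "(cr * (1 - tau) - 1) * xq + (1 - tau) * (Rv + hm cr Rv xq \<theta>) = 0"
  using S eq2_link[OF R] by (simp add: is_solution_def)

lemma sol_k_pos:
  assumes R: "0 < Rv" and t: "tau < 1" and S: "is_solution ps tau cr Rv m xJ xq \<theta>"
  shows "0 < 1 - (1 - tau) * cr"
proof (rule ccontr)
  assume "\<not> 0 < 1 - (1 - tau) * cr"
  then have k: "1 - (1 - tau) * cr \<le> 0" by simp
  have xq: "0 \<le> xq" using S by (simp add: is_solution_def)
  have "(1 - (1 - tau) * cr) * xq \<le> 0" using k xq by (simp add: mult_nonpos_nonneg)
  moreover have "0 < (1 - tau) * (Rv + hm cr Rv xq \<theta>)" using R t hm_nonneg[of cr Rv xq \<theta>] by simp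
  ultimately show False using sol_E2[OF R S] by (simp add: algebra_simps)
qed

lemma D_form:
  assumes R: "0 < Rv" and c: "0 < cr" and u: "0 \<le> u" and th: "0 \<le> \<theta>"
  shows "u - \<theta> - Jt cr Rv tau \<theta> u = (1 - (1 - tau) * cr) * u - (1 - tau) * (Rv + hm cr Rv u \<theta>)"
proof -
  have h: "hp cr Rv u \<theta> = hm cr Rv u \<theta> + cr * u + Rv - \<theta>" using hp_hm[OF R c u th] by simp
  show ?thesis unfolding Jt_def h by (simp add: algebra_simps)
qed

lemma sol_repr:
  assumes R: "0 < Rv" and c: "0 < cr" and t: "0 < tau" "tau < 1" and m: "0 < m"
    and S: "is_solution ps tau cr Rv m xJ xq \<theta>"
  shows "\<theta> * tau / ps = (\<integral>u. Psi cr Rv tau m \<theta> u \<partial>lborel)"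
    and "integrable lborel (Psi cr Rv tau m \<theta>)"
proof -
  have xJ: "0 \<le> xJ" and xq: "0 \<le> xq" and th: "0 < \<theta>" using S by (auto simp: is_solution_def)
  define j where "j u = Jt cr Rv tau \<theta> u * Fdens m u" for u
  define d where "d u = (u - \<theta>) * Fdens m u" for u
  have ij: "integrable lborel j" unfolding j_def by (rule j_integrable[OF R c t th m])
  have id: "integrable lborel d" unfolding d_def by (rule d_integrable[OF m])
  have ij1: "integrable lborel (\<lambda>u. indicator {xJ..} u * j u)"
    using integrable_real_mult_indicator[OF _ ij, of "{xJ..}"] by (simp add: mult.commute)
  have ij2: "integrable lborel (\<lambda>u. indicator {xq..} u * j u)"
    using integrable_real_mult_indicator[OF _ ij, of "{xq..}"] by (simp add: mult.commute)
  have id2: "integrable lborel (\<lambda>u. indicator {xq..} u * d u)"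
    using integrable_real_mult_indicator[OF _ id, of "{xq..}"] by (simp add: mult.commute)
  have E3: "(LBINT u = ereal xJ..ereal xq. j u) + (LINT u:{xq..}|lborel. d u) = \<theta> * tau / ps"
    using S by (simp add: is_solution_def j_def d_def Jfun_Jt)
  have pw: "indicator {xJ..} u * j u - indicator {xq..} u * j u + indicator {xq..} u * d u = Psi cr Rv tau m \<theta> u" for u
  proof (cases "u < 0")
    case True then show ?thesis by (simp add: j_def d_def Psi_def Fdens_neg)
  next
    case False
    then have u: "0 \<le> u" by simp
    define J where "J = Jt cr Rv tau \<theta> u"
    have SJ: "(xJ \<le> u \<longrightarrow> 0 \<le> J) \<and> (u < xJ \<longrightarrow> J \<le> 0)"
    proof (intro conjI impI)
      assume "xJ \<le> u"
      then have "hp cr Rv xJ \<theta> \<le> hp cr Rv u \<theta>" by (rule hp_mono_x[OF R c xJ _ th])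
      then have "(1 - tau) * hp cr Rv xJ \<theta> \<le> (1 - tau) * hp cr Rv u \<theta>" using t by simp
      then show "0 \<le> J" using sol_E1[OF R t(2) S] by (simp add: J_def Jt_def)
    next
      assume "u < xJ"
      then have "hp cr Rv u \<theta> < hp cr Rv xJ \<theta>" by (rule hp_strict_mono_x[OF R c u _ th])
      then have "(1 - tau) * hp cr Rv u \<theta> \<le> (1 - tau) * hp cr Rv xJ \<theta>" using t by simp
      then show "J \<le> 0" using sol_E1[OF R t(2) S] by (simp add: J_def Jt_def)
    qed
    have k: "0 < 1 - (1 - tau) * cr" by (rule sol_k_pos[OF R t(2) S])
    have E2: "(cr * (1 - tau) - 1) * xq + (1 - tau) * (Rv + hm cr Rv xq \<theta>) = 0" by (rule sol_E2[OF R S])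
    have Dq: "u - \<theta> - J = (1 - (1 - tau) * cr) * (u - xq) + (1 - tau) * (hm cr Rv xq \<theta> - hm cr Rv u \<theta>)"
      using D_form[OF R c u, of \<theta> tau] th E2 unfolding J_def by (simp add: algebra_simps)
    have SD: "(xq \<le> u \<longrightarrow> 0 \<le> u - \<theta> - J) \<and> (u < xq \<longrightarrow> u - \<theta> - J \<le> 0)"
    proof (intro conjI impI)
      assume "xq \<le> u"
      then have "hm cr Rv u \<theta> \<le> hm cr Rv xq \<theta>" using hm_mono_x[OF R c xq _] th by simp
      moreover have "0 \<le> (1 - (1 - tau) * cr) * (u - xq)" using k \<open>xq \<le> u\<close> by simp
      ultimately show "0 \<le> u - \<theta> - J" unfolding Dq using t by simp
    next
      assume "u < xq"
      then have "hm cr Rv xq \<theta> \<le> hm cr Rv u \<theta>" using hm_mono_x[OF R c u _] th by simp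
      moreover have "(1 - (1 - tau) * cr) * (u - xq) \<le> 0" using k \<open>u < xq\<close> by (simp add: mult_pos_neg less_imp_le)
      moreover have "(1 - tau) * (hm cr Rv xq \<theta> - hm cr Rv u \<theta>) \<le> 0"
        using calculation(1) t by (intro mult_nonneg_nonpos) auto
      ultimately show "u - \<theta> - J \<le> 0" unfolding Dq by simp
    qed
    show ?thesis
      unfolding j_def d_def Psi_def J_def[symmetric]
      using SJ SD by (cases "xJ \<le> u"; cases "xq \<le> u") (auto simp: indicator_def algebra_simps max_def)
  qed
  have "(LBINT u = ereal xJ..ereal xq. j u) + (LINT u:{xq..}|lborel. d u)
      = ((\<integral>u. indicator {xJ..} u * j u \<partial>lborel) - (\<integral>u. indicator {xq..} u * j u \<partial>lborel)) + (\<integral>u. indicator {xq..} u * d u \<partial>lborel)"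
    by (simp add: interval_split[OF ij] set_lebesgue_integral_def)
  also have "\<dots> = (\<integral>u. indicator {xJ..} u * j u - indicator {xq..} u * j u + indicator {xq..} u * d u \<partial>lborel)"
    using ij1 ij2 id2 by (simp add: Bochner_Integration.integral_diff Bochner_Integration.integral_add)
  also have "\<dots> = (\<integral>u. Psi cr Rv tau m \<theta> u \<partial>lborel)"
    using pw by (intro Bochner_Integration.integral_cong) auto
  finally show "\<theta> * tau / ps = (\<integral>u. Psi cr Rv tau m \<theta> u \<partial>lborel)" using E3 by simp
  have "integrable lborel (\<lambda>u. indicator {xJ..} u * j u - indicator {xq..} u * j u + indicator {xq..} u * d u)"
    using ij1 ij2 id2 by (intro Bochner_Integration.integrable_add Bochner_Integration.integrable_diff)
  then show "integrable lborel (Psi cr Rv tau m \<theta>)"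
    using pw by (subst (asm) Bochner_Integration.integrable_cong[OF refl, where g="Psi cr Rv tau m \<theta>"]) auto
qed




lemma Psi_mono:
  assumes R: "0 < Rv" and c: "0 < cr" and t: "0 < tau" "tau < 1" and m: "0 < m"
    and th: "0 < \<theta>1" "\<theta>1 \<le> \<theta>2"
  shows "Psi cr Rv tau m \<theta>2 u \<le> Psi cr Rv tau m \<theta>1 u"
proof (cases "u < 0")
  case True then show ?thesis by (simp add: Psi_def Fdens_neg)
next
  case False
  then have u: "0 \<le> u" by simp
  have h1: "hp cr Rv u \<theta>2 \<le> hp cr Rv u \<theta>1" using hp_mono_theta[OF R c u, of \<theta>1 \<theta>2] th by simp
  have h2: "\<theta>1 + hp cr Rv u \<theta>1 \<le> \<theta>2 + hp cr Rv u \<theta>2" using hp_plus_theta_mono[OF R c u, of \<theta>1 \<theta>2] th by simp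
  have J: "Jt cr Rv tau \<theta>2 u \<le> Jt cr Rv tau \<theta>1 u"
  proof -
    have "(1 - tau) * hp cr Rv u \<theta>2 \<le> (1 - tau) * hp cr Rv u \<theta>1" using h1 t by simp
    moreover have "\<theta>1 * tau \<le> \<theta>2 * tau" using th t by simp
    ultimately show ?thesis unfolding Jt_def by simp
  qed
  have D: "u - \<theta>2 - Jt cr Rv tau \<theta>2 u \<le> u - \<theta>1 - Jt cr Rv tau \<theta>1 u"
  proof -
    have "(1 - tau) * (\<theta>1 + hp cr Rv u \<theta>1) \<le> (1 - tau) * (\<theta>2 + hp cr Rv u \<theta>2)" using h2 t by simp
    then show ?thesis unfolding Jt_def by (simp add: algebra_simps)
  qed
  have "max (Jt cr Rv tau \<theta>2 u) 0 + max (u - \<theta>2 - Jt cr Rv tau \<theta>2 u) 0 \<le> max (Jt cr Rv tau \<theta>1 u) 0 + max (u - \<theta>1 - Jt cr Rv tau \<theta>1 u) 0"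
    using J D by (intro add_mono max.mono) auto
  then show ?thesis unfolding Psi_def by (rule mult_right_mono) (rule Fdens_nonneg[OF m])
qed

lemma theta_not_less:
  assumes p: "0 < ps" and R: "0 < Rv" and c: "0 < cr" and t: "0 < tau" "tau < 1" and m: "0 < m"
    and S1: "is_solution ps tau cr Rv m xJ xq \<theta>1" and S2: "is_solution ps tau cr Rv m xJ' xq' \<theta>2"
  shows "\<not> \<theta>1 < \<theta>2"
proof
  assume lt: "\<theta>1 < \<theta>2"
  have th1: "0 < \<theta>1" using S1 by (simp add: is_solution_def)
  have "(\<integral>u. Psi cr Rv tau m \<theta>2 u \<partial>lborel) \<le> (\<integral>u. Psi cr Rv tau m \<theta>1 u \<partial>lborel)"
    using sol_repr(2)[OF R c t m S1] sol_repr(2)[OF R c t m S2] Psi_mono[OF R c t m th1, of \<theta>2] lt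
    by (intro integral_mono) auto
  then have "\<theta>2 * tau / ps \<le> \<theta>1 * tau / ps"
    using sol_repr(1)[OF R c t m S1] sol_repr(1)[OF R c t m S2] by simp
  moreover have "\<theta>1 * tau / ps < \<theta>2 * tau / ps" using lt p t by (simp add: divide_strict_right_mono)
  ultimately show False by simp
qed

theorem lemma3:
  fixes ps tau cr Rv m :: real
  assumes "0 < ps" "ps < 1" "0 < tau" "tau < 1" "0 < cr" "0 < Rv" "0 < m"
  shows "\<forall>xJ xq theta xJ' xq' theta'.
           is_solution ps tau cr Rv m xJ xq theta \<and> is_solution ps tau cr Rv m xJ' xq' theta'
           \<longrightarrow> (xJ, xq, theta) = (xJ', xq', theta')"
proof (intro allI impI, elim conjE)
  fix xJ xq \<theta> xJ' xq' \<theta>'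
  assume S1: "is_solution ps tau cr Rv m xJ xq \<theta>" and S2: "is_solution ps tau cr Rv m xJ' xq' \<theta>'"
  note p = assms(1) and t = assms(3,4) and c = assms(5) and R = assms(6) and m = assms(7)
  have "\<not> \<theta> < \<theta>'" by (rule theta_not_less[OF p R c t m S1 S2])
  moreover have "\<not> \<theta>' < \<theta>" by (rule theta_not_less[OF p R c t m S2 S1])
  ultimately have th: "\<theta> = \<theta>'" by simp
  have th0: "0 < \<theta>" and xJ: "0 \<le> xJ" and xq: "0 \<le> xq" using S1 by (auto simp: is_solution_def)
  have xJ': "0 \<le> xJ'" and xq': "0 \<le> xq'" using S2 by (auto simp: is_solution_def)
  have "(1 - tau) * hp cr Rv xJ \<theta> = (1 - tau) * hp cr Rv xJ' \<theta>"
    using sol_E1[OF R t(2) S1] sol_E1[OF R t(2) S2] th by simp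
  then have e1: "hp cr Rv xJ \<theta> = hp cr Rv xJ' \<theta>" using t by simp
  have "xJ = xJ'"
  proof (rule ccontr)
    assume "xJ \<noteq> xJ'"
    then consider "xJ < xJ'" | "xJ' < xJ" by linarith
    then show False
    proof cases
      case 1 then show False using hp_strict_mono_x[OF R c xJ 1 th0] e1 by simp
    next
      case 2 then show False using hp_strict_mono_x[OF R c xJ' 2 th0] e1 by simp
    qed
  qed
  moreover have "xq = xq'"
  proof (rule ccontr)
    assume ne: "xq \<noteq> xq'"
    have k: "0 < 1 - (1 - tau) * cr" by (rule sol_k_pos[OF R t(2) S1])
    have E: "(cr * (1 - tau) - 1) * x + (1 - tau) * (Rv + hm cr Rv x \<theta>) = 0"
      if "x = xq \<or> x = xq'" for x
      using sol_E2[OF R S1] sol_E2[OF R S2] th that by auto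
    have key: "\<not> a < b" if ab: "a = xq \<and> b = xq' \<or> a = xq' \<and> b = xq" for a b
    proof
      assume "a < b"
      have a0: "0 \<le> a" using ab xq xq' by auto
      have "hm cr Rv b \<theta> \<le> hm cr Rv a \<theta>" using hm_mono_x[OF R c a0 _] \<open>a < b\<close> th0 by simp
      moreover have "(1 - (1 - tau) * cr) * (b - a) = (1 - tau) * (hm cr Rv b \<theta> - hm cr Rv a \<theta>)"
        using E[of a] E[of b] ab by (auto simp: algebra_simps)
      moreover have "0 < (1 - (1 - tau) * cr) * (b - a)" using k \<open>a < b\<close> by simp
      ultimately show False using t by (smt (verit) mult_nonneg_nonpos)
    qed
    show False using key[of xq xq'] key[of xq' xq] ne by auto
  qed
  ultimately show "(xJ, xq, \<theta>) = (xJ', xq', \<theta>')" using th by simp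
qed


end
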